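(* Let $k\ge2$, $\sigma_i=\frac{i(k-i)}2$ for $i=0,\dots,k$, and consider the system for $(b_2,\dots,b_k)$: $$\dot b_i=(b_i+\sigma_{i-1})(b_{i-1}-2b_i+b_{i+1}),\qquad i=2,\dots,k,$$ with the convention $b_1\equiv b_{k+1}\equiv0$. For all $\eta\in(0,\frac15]$ and $A\ge0$, the compact set $K=\prod_{i=2}^k[-\sigma_{i-1}+\eta,A]$ is stable (forward invariant) under the flow of this system. In particular, any solution whose initial data lies in $K$ is global (for forward times). *)

theory Defs
  imports "HOL-Analysis.Analysis"
begin

text \<open>States are functions x :: nat => real; only the coordinates i = 2..k are meaningful.\<close>

definition sigma :: "nat \<Rightarrow> nat \<Rightarrow> real" where
  "sigma k i = real i * (real k - real i) / 2"

definition bext :: "nat \<Rightarrow> (nat \<Rightarrow> real) \<Rightarrow> nat \<Rightarrow> real" where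
  "bext k x i = (if 2 \<le> i \<and> i \<le> k then x i else 0)"

definition rhs :: "nat \<Rightarrow> (nat \<Rightarrow> real) \<Rightarrow> nat \<Rightarrow> real" where
  "rhs k x i = (x i + sigma k (i - 1)) * (bext k x (i - 1) - 2 * x i + bext k x (i + 1))"

definition inK :: "nat \<Rightarrow> real \<Rightarrow> real \<Rightarrow> (nat \<Rightarrow> real) \<Rightarrow> bool" where
  "inK k \<eta> A x \<longleftrightarrow> (\<forall>i\<in>{2..k}. - sigma k (i - 1) + \<eta> \<le> x i \<and> x i \<le> A)"

definition is_solution :: "nat \<Rightarrow> real set \<Rightarrow> (real \<Rightarrow> nat \<Rightarrow> real) \<Rightarrow> bool" where
  "is_solution k I b \<longleftrightarrow>
     (\<forall>t\<in>I. \<forall>i\<in>{2..k}. ((\<lambda>s. b s i) has_real_derivative rhs k (b t) i) (at t within I))"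

end

theory Submission
  imports Defs
begin

lemma invariance:
  fixes f :: "(nat \<Rightarrow> real) \<Rightarrow> nat \<Rightarrow> real" and lo :: "nat \<Rightarrow> real" and hi dd T :: real
    and b :: "real \<Rightarrow> nat \<Rightarrow> real" and I :: "nat set"
  assumes fin: "finite I" and dd: "0 < dd"
    and H: "\<And>x i \<delta>. 0 < \<delta> \<Longrightarrow> \<delta> < dd \<Longrightarrow> i \<in> I \<Longrightarrow> (\<forall>j\<in>I. lo j - \<delta> \<le> x j \<and> x j \<le> hi + \<delta>)
             \<Longrightarrow> (x i = hi + \<delta> \<longrightarrow> f x i \<le> 0) \<and> (x i = lo i - \<delta> \<longrightarrow> 0 \<le> f x i)"
    and der: "\<And>t i. t \<in> {0..<T} \<Longrightarrow> i \<in> I \<Longrightarrow> ((\<lambda>s. b s i) has_real_derivative f (b t) i) (at t within {0..<T})"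
    and init: "\<And>i. i \<in> I \<Longrightarrow> lo i \<le> b 0 i \<and> b 0 i \<le> hi"
    and t0: "t0 \<in> {0..<T}" and i0: "i0 \<in> I"
  shows "lo i0 \<le> b t0 i0 \<and> b t0 i0 \<le> hi"
proof -
  have contT: "continuous_on {0..<T} (\<lambda>s. b s i)" if "i \<in> I" for i
    by (rule DERIV_continuous_on[OF der]) (use that in auto)
  have cont: "continuous_on {0..t0} (\<lambda>s. b s i)" if "i \<in> I" for i
    by (rule continuous_on_subset[OF contT[OF that]]) (use t0 in auto)
  have key: "\<forall>t\<in>{0..t0}. \<forall>i\<in>I. lo i - \<epsilon>*(1+t) < b t i \<and> b t i < hi + \<epsilon>*(1+t)"
    if eps: "0 < \<epsilon>" "\<epsilon>*(1+t0) < dd" for \<epsilon>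
  proof (rule ccontr)
    define S where "S = {t\<in>{0..t0}. \<exists>i\<in>I. \<not> (lo i - \<epsilon>*(1+t) < b t i \<and> b t i < hi + \<epsilon>*(1+t))}"
    assume "\<not> ?thesis"
    hence Sne: "S \<noteq> {}" unfolding S_def by auto
    have S_eq: "S = (\<Union>i\<in>I. {t\<in>{0..t0}. b t i \<le> lo i - \<epsilon>*(1+t)} \<union> {t\<in>{0..t0}. hi + \<epsilon>*(1+t) \<le> b t i})"
      unfolding S_def by (auto simp: not_less)
    have "closed S" unfolding S_eq
      by (intro closed_UN fin ballI closed_Un continuous_on_closed_Collect_le cont
            continuous_intros) auto
    moreover have bdd: "bdd_below S" unfolding S_def by (auto intro: bdd_belowI[of _ 0])
    ultimately have sS: "Inf S \<in> S" using Sne closed_contains_Inf by blast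
    define s where "s = Inf S"
    have s_range: "0 \<le> s" "s \<le> t0" using sS unfolding s_def S_def by auto
    have before: "lo i - \<epsilon>*(1+t) < b t i \<and> b t i < hi + \<epsilon>*(1+t)" if "t \<in> {0..<s}" "i \<in> I" for t i
    proof -
      have "t \<notin> S" using cInf_lower[OF _ bdd, of t] that unfolding s_def by force
      thus ?thesis using that s_range unfolding S_def by auto
    qed
    have "s \<noteq> 0"
    proof
      assume "s = 0"
      then obtain i where "i \<in> I" "\<not> (lo i - \<epsilon>*(1+0) < b 0 i \<and> b 0 i < hi + \<epsilon>*(1+0))"
        using sS unfolding s_def S_def by auto
      thus False using init[of i] eps by auto
    qed
    hence spos: "0 < s" using s_range by auto
    have closed_at_s: "lo j - \<epsilon>*(1+s) \<le> b s j \<and> b s j \<le> hi + \<epsilon>*(1+s)" if j: "j \<in> I" for j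
    proof -
      have c1: "closed {t\<in>{0..t0}. lo j - \<epsilon>*(1+t) \<le> b t j}"
        by (intro continuous_on_closed_Collect_le cont j continuous_intros)
      have c2: "closed {t\<in>{0..t0}. b t j \<le> hi + \<epsilon>*(1+t)}"
        by (intro continuous_on_closed_Collect_le cont j continuous_intros)
      have sub1: "{0..<s} \<subseteq> {t\<in>{0..t0}. lo j - \<epsilon>*(1+t) \<le> b t j}"
        using before[OF _ j] s_range by fastforce
      have sub2: "{0..<s} \<subseteq> {t\<in>{0..t0}. b t j \<le> hi + \<epsilon>*(1+t)}"
        using before[OF _ j] s_range by fastforce
      have "s \<in> closure {0..<s}" using spos by simp
      hence "s \<in> {t\<in>{0..t0}. lo j - \<epsilon>*(1+t) \<le> b t j} \<and> s \<in> {t\<in>{0..t0}. b t j \<le> hi + \<epsilon>*(1+t)}"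
        using closure_minimal[OF sub1 c1] closure_minimal[OF sub2 c2] by blast
      thus ?thesis by auto
    qed
    obtain i where i: "i \<in> I" and bad: "\<not> (lo i - \<epsilon>*(1+s) < b s i \<and> b s i < hi + \<epsilon>*(1+s))"
      using sS unfolding s_def S_def by auto
    have sT: "s \<in> {0..<T}" using s_range t0 by auto
    have \<delta>: "0 < \<epsilon>*(1+s)" "\<epsilon>*(1+s) < dd"
      using eps s_range by (auto intro: le_less_trans[OF mult_left_mono[of "1+s" "1+t0"]])
    note Hs = H[OF \<delta> i, of "b s"]
    have inS: "\<forall>j\<in>I. lo j - \<epsilon>*(1+s) \<le> b s j \<and> b s j \<le> hi + \<epsilon>*(1+s)"
      using closed_at_s by blast
    have Hs': "(b s i = hi + \<epsilon>*(1+s) \<longrightarrow> f (b s) i \<le> 0) \<and> (b s i = lo i - \<epsilon>*(1+s) \<longrightarrow> 0 \<le> f (b s) i)"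
      using Hs inS by blast
    have leftpos: "\<exists>h>0. h < d \<and> s - h \<in> {0..<T} \<and> s - h \<in> {0..<s}" if "d > 0" for d
      using that spos sT by (intro exI[of _ "min d s / 2"]) auto
    consider "b s i = hi + \<epsilon>*(1+s)" | "b s i = lo i - \<epsilon>*(1+s)"
      using bad closed_at_s[OF i] by linarith
    thus False
    proof cases
      case 1
      have "((\<lambda>t. hi + \<epsilon>*(1+t) - b t i) has_real_derivative (\<epsilon> - f (b s) i)) (at s within {0..<T})"
        by (auto intro!: derivative_eq_intros der[OF sT i])
      moreover have "0 < \<epsilon> - f (b s) i" using Hs' 1 eps by auto
      ultimately obtain d where d: "d > 0" and dd: "\<forall>h>0. s - h \<in> {0..<T} \<longrightarrow> h < d \<longrightarrow>
          hi + \<epsilon>*(1+(s-h)) - b (s-h) i < hi + \<epsilon>*(1+s) - b s i"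
        using has_real_derivative_pos_inc_left by blast
      obtain h where h: "h > 0" "h < d" "s - h \<in> {0..<T}" "s - h \<in> {0..<s}" using leftpos[OF d] by blast
      from dd h have "hi + \<epsilon>*(1+(s-h)) - b (s-h) i < 0" using 1 by auto
      moreover have "b (s-h) i < hi + \<epsilon>*(1+(s-h))" using before[OF h(4) i] by auto
      ultimately show False by linarith
    next
      case 2
      have "((\<lambda>t. b t i - (lo i - \<epsilon>*(1+t))) has_real_derivative (f (b s) i + \<epsilon>)) (at s within {0..<T})"
        by (auto intro!: derivative_eq_intros der[OF sT i])
      moreover have "0 < f (b s) i + \<epsilon>" using Hs' 2 eps by auto
      ultimately obtain d where d: "d > 0" and dd: "\<forall>h>0. s - h \<in> {0..<T} \<longrightarrow> h < d \<longrightarrow>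
          b (s-h) i - (lo i - \<epsilon>*(1+(s-h))) < b s i - (lo i - \<epsilon>*(1+s))"
        using has_real_derivative_pos_inc_left by blast
      obtain h where h: "h > 0" "h < d" "s - h \<in> {0..<T}" "s - h \<in> {0..<s}" using leftpos[OF d] by blast
      from dd h have "b (s-h) i - (lo i - \<epsilon>*(1+(s-h))) < 0" using 2 by auto
      moreover have "lo i - \<epsilon>*(1+(s-h)) < b (s-h) i" using before[OF h(4) i] by auto
      ultimately show False by linarith
    qed
  qed
  have t0r: "0 \<le> t0" using t0 by auto
  have c: "0 < 2*(1+t0)" using t0r by auto
  show ?thesis
  proof (rule ccontr)
    assume "\<not> ?thesis"
    then obtain g where g: "0 < g" "b t0 i0 + g \<le> lo i0 \<or> hi + g \<le> b t0 i0"
      by (metis add.commute diff_add_cancel diff_gt_0_iff_gt linorder_not_le order_refl)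
    define \<epsilon> where "\<epsilon> = min dd g / (2*(1+t0))"
    have e1: "0 < \<epsilon>" unfolding \<epsilon>_def using g dd c by auto
    have e2: "\<epsilon>*(1+t0) = min dd g / 2" unfolding \<epsilon>_def using c by (auto simp: field_simps)
    have e3: "\<epsilon>*(1+t0) < dd" "\<epsilon>*(1+t0) < g" using e2 dd g by auto
    from key[OF e1 e3(1)] t0r i0 have "lo i0 - \<epsilon>*(1+t0) < b t0 i0 \<and> b t0 i0 < hi + \<epsilon>*(1+t0)" by auto
    thus False using g e3 by linarith
  qed
qed


lemma lip_comp:
  fixes F :: "(nat \<Rightarrow> real) \<Rightarrow> nat \<Rightarrow> real" and Q :: "real \<Rightarrow> nat \<Rightarrow> real"
  assumes fin: "finite I" and L: "0 \<le> L" and C: "0 \<le> C"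
   and lip: "\<And>x y i. i\<in>I \<Longrightarrow> \<bar>F x i - F y i\<bar> \<le> L * (\<Sum>j\<in>I. \<bar>x j - y j\<bar>)"
   and Q: "\<And>j. j \<in> I \<Longrightarrow> C-lipschitz_on X (\<lambda>s. Q s j)"
   and i: "i \<in> I"
  shows "(L * (real (card I) * C))-lipschitz_on X (\<lambda>s. F (Q s) i)"
proof (rule lipschitz_onI)
  fix s t assume st: "s \<in> X" "t \<in> X"
  have A: "dist (F (Q s) i) (F (Q t) i) \<le> L * (\<Sum>j\<in>I. \<bar>Q s j - Q t j\<bar>)"
    using lip[OF i] by (simp add: dist_real_def)
  have B: "(\<Sum>j\<in>I. \<bar>Q s j - Q t j\<bar>) \<le> (\<Sum>j\<in>I. C * dist s t)"
    using Q st by (intro sum_mono) (auto simp: lipschitz_on_def dist_real_def)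
  have "(\<Sum>j\<in>I. C * dist s t) = real (card I) * C * dist s t" by simp
  with A mult_left_mono[OF B L]
  show "dist (F (Q s) i) (F (Q t) i) \<le> L * (real (card I) * C) * dist s t"
    by (simp add: mult.assoc)
next
  show "0 \<le> L * (real (card I) * C)" using L C by simp
qed

lemma deriv_pow_fact:
  fixes K L N :: real
  shows "((\<lambda>s. K / fact (Suc (Suc n)) * s^(Suc (Suc n))) has_real_derivative K * s^(Suc n) / fact (Suc n)) (at s within X)"
proof -
  have d: "((\<lambda>s. s^(Suc(Suc n))) has_real_derivative real (Suc (Suc n)) * s^(Suc n)) (at s within X)"
    using DERIV_pow[of "Suc (Suc n)" s] by (auto intro: has_field_derivative_at_within)
  have aux: "m \<noteq> 0 \<Longrightarrow> f \<noteq> 0 \<Longrightarrow> (a/(m*f)) * (m*x) = a*x/(f::real)" for a m f x by (simp add: field_simps)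
  have fs: "fact (Suc (Suc n)) = real (Suc (Suc n)) * (fact (Suc n)::real)" by (rule fact_Suc)
  have e: "K / fact (Suc (Suc n)) * (real (Suc (Suc n)) * s^(Suc n)) = K * s^(Suc n) / fact (Suc n)"
    unfolding fs by (rule aux) auto
  show ?thesis using DERIV_cmult[OF d, of "K / fact (Suc (Suc n))"] unfolding e .
qed

lemma picard:
  fixes F :: "(nat \<Rightarrow> real) \<Rightarrow> nat \<Rightarrow> real" and I :: "nat set" and x0 :: "nat \<Rightarrow> real" and M L :: real
  assumes fin: "finite I" and M: "0 \<le> M" and L: "0 \<le> L"
   and bnd: "\<And>x i. i\<in>I \<Longrightarrow> \<bar>F x i\<bar> \<le> M"
   and lip: "\<And>x y i. i\<in>I \<Longrightarrow> \<bar>F x i - F y i\<bar> \<le> L * (\<Sum>j\<in>I. \<bar>x j - y j\<bar>)"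
  shows "\<exists>b. b 0 = x0 \<and> (\<forall>t\<ge>0. \<forall>i\<in>I. ((\<lambda>s. b s i) has_real_derivative F (b t) i) (at t within {0..}))"
proof -
  define N where "N = real (card I)"
  have N: "0 \<le> N" unfolding N_def by simp
  define P :: "nat \<Rightarrow> real \<Rightarrow> nat \<Rightarrow> real" where "P = rec_nat (\<lambda>t. x0) (\<lambda>n Pn. \<lambda>t j. if j \<in> I then x0 j + integral {0..t} (\<lambda>s. F (Pn s) j) else x0 j)"
  have P0: "P 0 = (\<lambda>t. x0)" unfolding P_def by simp
  have PS: "P (Suc n) t j = (if j\<in>I then x0 j + integral {0..t} (\<lambda>s. F (P n s) j) else x0 j)" for n t j
    unfolding P_def by simp
  have lipt: "\<forall>j\<in>I. M-lipschitz_on {0..} (\<lambda>s. P n s j)" for n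
  proof (induction n)
    case 0 show ?case using M by (auto simp: P0 intro!: lipschitz_onI)
  next
    case (Suc n)
    have lF: "(L * (N * M))-lipschitz_on {0..} (\<lambda>s. F (P n s) i)" if "i \<in> I" for i
      unfolding N_def by (rule lip_comp[OF fin L M lip]) (use Suc that in auto)
    have contF: "continuous_on {a..b} (\<lambda>s. F (P n s) i)" if "i \<in> I" "0 \<le> a" for i a b
      by (rule continuous_on_subset[OF lipschitz_on_continuous_on[OF lF[OF that(1)]]]) (use that in auto)
    have one: "\<bar>P (Suc n) t j - P (Suc n) s j\<bar> \<le> M * (t - s)" if "j \<in> I" "0 \<le> s" "s \<le> t" for j s t
    proof -
      have "integral {0..s} (\<lambda>s. F (P n s) j) + integral {s..t} (\<lambda>s. F (P n s) j) = integral {0..t} (\<lambda>s. F (P n s) j)"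
        using Henstock_Kurzweil_Integration.integral_combine[where a=0 and c=s and b=t and f="\<lambda>s. F (P n s) j"] that integrable_continuous_interval[OF contF[OF that(1), of 0 t]] by simp
      moreover have "norm (integral {s..t} (\<lambda>s. F (P n s) j)) \<le> M * (t - s)"
        by (rule integral_bound) (use that in \<open>auto intro!: contF bnd\<close>)
      ultimately show ?thesis using that by (auto simp: PS)
    qed
    show ?case
    proof (intro ballI lipschitz_onI M)
      fix j x y assume j: "j \<in> I" and xy: "x \<in> {0::real..}" "y \<in> {0::real..}"
      show "dist (P (Suc n) x j) (P (Suc n) y j) \<le> M * dist x y"
      proof (cases "x \<le> y")
        case True thus ?thesis using one[OF j _ True] xy by (auto simp: dist_real_def abs_minus_commute)
      next
        case False thus ?thesis using one[OF j _, of y x] xy by (auto simp: dist_real_def)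
      qed
    qed
  qed
  have lF: "(L * (N * M))-lipschitz_on {0..} (\<lambda>s. F (P n s) i)" if "i \<in> I" for i n
    unfolding N_def by (rule lip_comp[OF fin L M lip]) (use lipt that in auto)
  have contF: "continuous_on {a..b} (\<lambda>s. F (P n s) i)" if "i \<in> I" "0 \<le> a" for i a b n
    by (rule continuous_on_subset[OF lipschitz_on_continuous_on[OF lF[OF that(1)]]]) (use that in auto)
  define c where "c n = M * (N*L)^n" for n
  have c0: "0 \<le> c n" for n unfolding c_def using M N L by simp
  have diff: "\<bar>P (Suc n) t j - P n t j\<bar> \<le> c n * t^(Suc n) / fact (Suc n)" if "0 \<le> t" "j \<in> I" for n t j
    using that
  proof (induction n arbitrary: t j)
    case 0
    have "norm (integral {0..t} (\<lambda>s. F x0 j)) \<le> M * (t - 0)"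
      by (rule integral_bound) (use 0 in \<open>auto intro!: bnd\<close>)
    thus ?case using 0 by (simp add: PS P0 c_def)
  next
    case (Suc n)
    define g where "g s = L * N * c n * s^(Suc n) / fact (Suc n)" for s :: real
    define G where "G s = L * N * c n / fact (Suc (Suc n)) * s^(Suc (Suc n))" for s :: real
    have Gd: "(G has_real_derivative g s) (at s within X)" for s X
      unfolding G_def g_def by (rule deriv_pow_fact)
    have gint: "(g has_integral (G t - G 0)) {0..t}"
      by (rule fundamental_theorem_of_calculus) (use Suc.prems Gd in \<open>auto simp: has_real_derivative_iff_has_vector_derivative[symmetric]\<close>)
    have int1: "(\<lambda>s. F (P (Suc n) s) j) integrable_on {0..t}" "(\<lambda>s. F (P n s) j) integrable_on {0..t}"
      by (auto intro!: integrable_continuous_interval contF Suc.prems)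
    have eq: "P (Suc (Suc n)) t j - P (Suc n) t j = integral {0..t} (\<lambda>s. F (P (Suc n) s) j - F (P n s) j)"
      using Suc.prems int1 by (simp add: PS integral_diff)
    have pw: "norm (F (P (Suc n) s) j - F (P n s) j) \<le> g s" if "s \<in> {0..t}" for s
    proof -
      have "\<bar>F (P (Suc n) s) j - F (P n s) j\<bar> \<le> L * (\<Sum>i\<in>I. \<bar>P (Suc n) s i - P n s i\<bar>)"
        by (rule lip[OF Suc.prems(2)])
      also have "\<dots> \<le> L * (\<Sum>i\<in>I. c n * s^(Suc n) / fact (Suc n))"
        using that Suc.IH by (intro mult_left_mono[OF sum_mono L]) auto
      also have "\<dots> = g s" unfolding g_def N_def by simp
      finally show ?thesis by simp
    qed
    have "norm (integral {0..t} (\<lambda>s. F (P (Suc n) s) j - F (P n s) j)) \<le> integral {0..t} g"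
      by (rule integral_norm_bound_integral) (use int1 gint pw in \<open>auto intro: integrable_diff\<close>)
    also have "integral {0..t} g = G t" using gint integral_unique by (simp add: G_def)
    also have "G t = c (Suc n) * t^(Suc (Suc n)) / fact (Suc (Suc n))"
      unfolding G_def c_def by (simp add: mult_ac)
    finally show ?case using eq by simp
  qed
  define a where "a n t = c n * t^(Suc n) / fact (Suc n)" for n and t :: real
  have a0: "0 \<le> a n t" if "0 \<le> t" for n t unfolding a_def using c0 that by simp
  have amono: "a n s \<le> a n t" if "0 \<le> s" "s \<le> t" for n s t
    unfolding a_def using that c0 by (intro divide_right_mono mult_left_mono power_mono) auto
  have asum: "summable (\<lambda>n. a n t)" if t: "0 \<le> t" for t
  proof (rule summable_comparison_test')
    show "summable (\<lambda>n. (M*t) * (inverse (fact n) * (N*L*t)^n))" by (intro summable_mult summable_exp)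
    fix n :: nat
    have "a n t = (M*t) * ((N*L*t)^n / fact (Suc n))"
      unfolding a_def c_def by (simp add: power_mult_distrib mult_ac)
    also have "\<dots> \<le> (M*t) * ((N*L*t)^n / fact n)"
      using M t N L by (intro mult_left_mono divide_left_mono) (auto simp: fact_mono)
    finally show "norm (a n t) \<le> (M*t) * (inverse (fact n) * (N*L*t)^n)"
      using a0[OF t, of n] by (simp add: field_simps)
  qed
  define d where "d n t j = P (Suc n) t j - P n t j" for n t j
  have dle: "\<bar>d n s j\<bar> \<le> a n t" if "0 \<le> s" "s \<le> t" "j \<in> I" for n s t j
    using diff[OF that(1,3), of n] amono[OF that(1,2), of n] unfolding d_def a_def by linarith
  have dsum: "summable (\<lambda>n. \<bar>d (n+m) s j\<bar>)" if "0 \<le> s" "j \<in> I" for s j m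
    by (rule summable_comparison_test'[OF summable_ignore_initial_segment[OF asum[OF that(1)], of m]])
       (use dle that in auto)
  have dsum': "summable (\<lambda>n. d n s j)" if "0 \<le> s" "j \<in> I" for s j
    using dsum[OF that, of 0] summable_rabs_cancel by auto
  define b where "b t j = x0 j + (\<Sum>n. d n t j)" for t j
  have tele: "P n t j = x0 j + (\<Sum>m<n. d m t j)" for n t j
    unfolding d_def using sum_lessThan_telescope[of "\<lambda>m. P m t j" n] by (simp add: P0)
  define U where "U n t = (\<Sum>m. a (m+n) t)" for n t
  have tail: "\<bar>b s j - P n s j\<bar> \<le> U n t" if "0 \<le> s" "s \<le> t" "j \<in> I" for n s t j
  proof -
    have "b s j - P n s j = (\<Sum>m. d (m+n) s j)"
      unfolding b_def tele using suminf_minus_initial_segment[OF dsum'[OF that(1,3)], of n] by simp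
    also have "\<bar>\<dots>\<bar> \<le> (\<Sum>m. \<bar>d (m+n) s j\<bar>)" by (rule summable_rabs[OF dsum[OF that(1,3)]])
    also have "\<dots> \<le> U n t" unfolding U_def
      by (rule suminf_le) (use dle that summable_ignore_initial_segment[OF asum] dsum in auto)
    finally show ?thesis .
  qed
  have Ulim: "(\<lambda>n. U n t) \<longlonglongrightarrow> 0" if "0 \<le> t" for t
  proof -
    have "U n t = (\<Sum>m. a m t) - (\<Sum>m<n. a m t)" for n
      unfolding U_def by (rule suminf_minus_initial_segment[OF asum[OF that]])
    moreover have "(\<lambda>n. (\<Sum>m. a m t) - (\<Sum>m<n. a m t)) \<longlonglongrightarrow> (\<Sum>m. a m t) - (\<Sum>m. a m t)"
      by (intro tendsto_diff tendsto_const summable_LIMSEQ asum that)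
    ultimately show ?thesis by simp
  qed
  have Pconv: "(\<lambda>n. P n s j) \<longlonglongrightarrow> b s j" if "0 \<le> s" "j \<in> I" for s j
  proof (rule LIM_zero_cancel, rule Lim_null_comparison)
    show "\<forall>\<^sub>F n in sequentially. norm (P n s j - b s j) \<le> U n s"
      using tail[OF that(1) order_refl that(2)] by (auto simp: abs_minus_commute)
  qed (rule Ulim[OF that(1)])
  have lipb: "M-lipschitz_on {0..} (\<lambda>s. b s j)" if j: "j \<in> I" for j
  proof (rule lipschitz_onI[OF _ M])
    fix x y :: real assume xy: "x \<in> {0..}" "y \<in> {0..}"
    have "(\<lambda>n. dist (P n x j) (P n y j)) \<longlonglongrightarrow> dist (b x j) (b y j)"
      using xy by (intro tendsto_dist Pconv j) auto
    moreover have "\<forall>n. dist (P n x j) (P n y j) \<le> M * dist x y"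
      using lipt j xy by (auto simp: lipschitz_on_def)
    ultimately show "dist (b x j) (b y j) \<le> M * dist x y"
      by (intro LIMSEQ_le_const2) auto
  qed
  have lFb: "(L * (N * M))-lipschitz_on {0..} (\<lambda>s. F (b s) i)" if "i \<in> I" for i
    unfolding N_def by (rule lip_comp[OF fin L M lip]) (use lipb that in auto)
  have contFb: "continuous_on {a..b'} (\<lambda>s. F (b s) i)" if "i \<in> I" "0 \<le> a" for i a b'
    by (rule continuous_on_subset[OF lipschitz_on_continuous_on[OF lFb[OF that(1)]]]) (use that in auto)
  have inteq: "b t j = x0 j + integral {0..t} (\<lambda>s. F (b s) j)" if t: "0 \<le> t" and j: "j \<in> I" for t j
  proof -
    have l1: "(\<lambda>n. x0 j + integral {0..t} (\<lambda>s. F (P n s) j)) \<longlonglongrightarrow> b t j"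
      using LIMSEQ_Suc[OF Pconv[OF t j]] j by (simp add: PS)
    have "(\<lambda>n. integral {0..t} (\<lambda>s. F (P n s) j) - integral {0..t} (\<lambda>s. F (b s) j)) \<longlonglongrightarrow> 0"
    proof (rule Lim_null_comparison)
      show "(\<lambda>n. (L * N * U n t) * (t - 0)) \<longlonglongrightarrow> 0"
        by (intro tendsto_mult_left_zero tendsto_mult_right_zero Ulim t)
      show "\<forall>\<^sub>F n in sequentially. norm (integral {0..t} (\<lambda>s. F (P n s) j) - integral {0..t} (\<lambda>s. F (b s) j)) \<le> (L * N * U n t) * (t - 0)"
      proof (intro always_eventually allI)
        fix n
        have "integral {0..t} (\<lambda>s. F (P n s) j) - integral {0..t} (\<lambda>s. F (b s) j) = integral {0..t} (\<lambda>s. F (P n s) j - F (b s) j)"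
          by (rule integral_diff[symmetric]) (auto intro!: integrable_continuous_interval contF contFb j)
        also have "norm \<dots> \<le> (L * N * U n t) * (t - 0)"
        proof (rule integral_bound)
          show "continuous_on {0..t} (\<lambda>s. F (P n s) j - F (b s) j)"
            by (intro continuous_intros contF contFb j) auto
          fix s assume s: "s \<in> {0..t}"
          have "\<bar>F (P n s) j - F (b s) j\<bar> \<le> L * (\<Sum>i\<in>I. \<bar>P n s i - b s i\<bar>)" by (rule lip[OF j])
          also have "\<dots> \<le> L * (\<Sum>i\<in>I. U n t)"
            using tail s by (intro mult_left_mono[OF sum_mono L]) (auto simp: abs_minus_commute)
          also have "\<dots> = L * N * U n t" unfolding N_def by simp
          finally show "norm (F (P n s) j - F (b s) j) \<le> L * N * U n t" by simp
        qed (use t in auto)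
        finally show "norm (integral {0..t} (\<lambda>s. F (P n s) j) - integral {0..t} (\<lambda>s. F (b s) j)) \<le> (L * N * U n t) * (t - 0)" .
      qed
    qed
    hence "(\<lambda>n. x0 j + integral {0..t} (\<lambda>s. F (P n s) j)) \<longlonglongrightarrow> x0 j + integral {0..t} (\<lambda>s. F (b s) j)"
      by (intro tendsto_add tendsto_const) (rule LIM_zero_cancel)
    with l1 show ?thesis using LIMSEQ_unique by blast
  qed
  have b0: "b 0 = x0"
  proof
    fix j
    have "P n 0 = x0" for n by (cases n) (auto simp: PS P0)
    thus "b 0 j = x0 j" unfolding b_def d_def by simp
  qed
  have deriv: "((\<lambda>s. b s i) has_real_derivative F (b t) i) (at t within {0..})" if t: "0 \<le> t" and i: "i \<in> I" for t i
  proof -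
    have "((\<lambda>u. integral {0..u} (\<lambda>s. F (b s) i)) has_real_derivative F (b t) i) (at t within {0..t+1})"
      by (rule integral_has_real_derivative) (use t in \<open>auto intro!: contFb i\<close>)
    hence "((\<lambda>u. x0 i + integral {0..u} (\<lambda>s. F (b s) i)) has_real_derivative F (b t) i) (at t within {0..t+1})"
      by (auto intro!: derivative_eq_intros)
    moreover have "at t within {0..t+1} = at t within {0..}"
      by (rule at_within_nhd[where S="{..<t+1}"]) auto
    ultimately have "((\<lambda>u. x0 i + integral {0..u} (\<lambda>s. F (b s) i)) has_real_derivative F (b t) i) (at t within {0..})"
      by simp
    thus ?thesis
      by (rule has_field_derivative_transform_within[where d=1]) (use t inteq[OF _ i] in auto)
  qed
  show ?thesis using b0 deriv by blast
qed


lemma sigma_nonneg: "i \<le> k \<Longrightarrow> 0 \<le> sigma k i"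
  unfolding sigma_def by simp

lemma sigma_le: "i \<le> k \<Longrightarrow> sigma k i \<le> real k * real k"
proof -
  assume "i \<le> k"
  hence "real i \<le> real k" "real k - real i \<le> real k" "0 \<le> real k - real i" by auto
  hence "real i * (real k - real i) \<le> real k * real k" by (intro mult_mono) auto
  moreover have "0 \<le> real k * real k" by simp
  ultimately show ?thesis unfolding sigma_def by linarith
qed

lemma sigma_2nd: "2 \<le> i \<Longrightarrow> 2 * sigma k (i-1) - sigma k (i-1-1) - sigma k i = 1"
proof -
  assume "2 \<le> i"
  then obtain m where m: "i = m + 2" by (metis le_add_diff_inverse2)
  show ?thesis unfolding sigma_def m by (simp add: field_simps)
qed

lemma sigma_ge_half: "2 \<le> j \<Longrightarrow> j \<le> k \<Longrightarrow> 1/2 \<le> sigma k (j-1)"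
proof -
  assume j: "2 \<le> j" "j \<le> k"
  have e: "real (j-1) = real j - 1" using j by (simp add: of_nat_diff)
  have "1 \<le> real j - 1" "1 \<le> real k - (real j - 1)" using j by auto
  hence "1 * 1 \<le> (real j - 1) * (real k - (real j - 1))" by (intro mult_mono) auto
  thus ?thesis unfolding sigma_def e by simp
qed

lemma sign_rhs:
  fixes x :: "nat \<Rightarrow> real"
  assumes k: "2 \<le> k" and eta: "\<eta> \<le> 1/2" and d: "0 \<le> \<delta>" "\<delta> < \<eta>" and A: "0 \<le> A"
    and i: "i \<in> {2..k}"
    and box: "\<forall>j\<in>{2..k}. - sigma k (j-1) + \<eta> - \<delta> \<le> x j \<and> x j \<le> A + \<delta>"
  shows "(x i = A + \<delta> \<longrightarrow> rhs k x i \<le> 0) \<and> (x i = - sigma k (i-1) + \<eta> - \<delta> \<longrightarrow> 0 \<le> rhs k x i)"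
proof (intro conjI impI)
  assume xi: "x i = A + \<delta>"
  have f1: "0 \<le> x i + sigma k (i-1)" using xi A d sigma_nonneg[of "i-1" k] i by auto
  have b1: "bext k x (i-1) \<le> A + \<delta>" using box A d unfolding bext_def by auto
  have b2: "bext k x (i+1) \<le> A + \<delta>" using box A d unfolding bext_def by auto
  have f2: "bext k x (i - 1) - 2 * x i + bext k x (i + 1) \<le> 0" using b1 b2 xi by linarith
  show "rhs k x i \<le> 0" unfolding rhs_def using f1 f2 by (rule mult_nonneg_nonpos)
next
  assume xi: "x i = - sigma k (i-1) + \<eta> - \<delta>"
  have f1: "0 \<le> x i + sigma k (i-1)" using xi d by auto
  have b1: "- sigma k (i-1-1) \<le> bext k x (i-1)"
  proof (cases "2 \<le> i - 1")
    case True
    hence "i - 1 \<in> {2..k}" using i by auto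
    hence "- sigma k (i-1-1) + \<eta> - \<delta> \<le> x (i-1)" using bspec[OF box, of "i-1"] by blast
    thus ?thesis using True i d unfolding bext_def by auto
  next
    case False
    hence "i - 1 - 1 = 0" by auto
    thus ?thesis using False unfolding bext_def sigma_def by auto
  qed
  have b2: "- sigma k i \<le> bext k x (i+1)"
  proof (cases "i + 1 \<le> k")
    case True
    hence "i + 1 \<in> {2..k}" using i by auto
    hence "- sigma k (i+1-1) + \<eta> - \<delta> \<le> x (i+1)" using bspec[OF box, of "i+1"] by blast
    thus ?thesis using True i d unfolding bext_def by auto
  next
    case False
    hence "i = k" using i by auto
    thus ?thesis using False unfolding bext_def sigma_def by auto
  qed
  have "2 * sigma k (i-1) - sigma k (i-1-1) - sigma k i = 1" using i by (intro sigma_2nd) auto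
  hence f2: "0 \<le> bext k x (i - 1) - 2 * x i + bext k x (i + 1)" using b1 b2 xi eta d by linarith
  show "0 \<le> rhs k x i" unfolding rhs_def using f1 f2 by simp
qed

definition clampK :: "nat \<Rightarrow> real \<Rightarrow> real \<Rightarrow> (nat \<Rightarrow> real) \<Rightarrow> nat \<Rightarrow> real" where
  "clampK k \<eta> A x j = (if j \<in> {2..k} then max (- sigma k (j-1) + \<eta>) (min A (x j)) else x j)"

lemma rhs_local:
  assumes "\<forall>j\<in>{2..k}. y j = y' j" "i \<in> {2..k}"
  shows "rhs k y i = rhs k y' i"
  using assms unfolding rhs_def bext_def by auto

lemma bext_bound:
  assumes "\<forall>j\<in>{2..k}. \<bar>y j\<bar> \<le> S" "0 \<le> S"
  shows "\<bar>bext k y j\<bar> \<le> S"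
  using assms unfolding bext_def by auto

lemma bext_lip:
  shows "\<bar>bext k y j - bext k y' j\<bar> \<le> (\<Sum>m\<in>{2..k}. \<bar>y m - y' m\<bar>)"
proof (cases "j \<in> {2..k}")
  case True
  thus ?thesis unfolding bext_def
    using member_le_sum[of j "{2..k}" "\<lambda>m. \<bar>y m - y' m\<bar>"] by auto
next
  case False thus ?thesis unfolding bext_def by (auto intro: sum_nonneg)
qed

lemma rhs_bound:
  assumes box: "\<forall>j\<in>{2..k}. \<bar>y j\<bar> \<le> S" and S: "real k * real k \<le> S" and i: "i \<in> {2..k}"
  shows "\<bar>rhs k y i\<bar> \<le> (2*S) * (4*S)"
proof -
  have S0: "0 \<le> S" using S by (metis mult_nonneg_nonneg of_nat_0_le_iff order_trans)
  have "\<bar>y i + sigma k (i-1)\<bar> \<le> 2*S"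
  proof -
    have "0 \<le> sigma k (i-1)" "sigma k (i-1) \<le> real k * real k" "\<bar>y i\<bar> \<le> S"
      using box i sigma_nonneg[of "i-1" k] sigma_le[of "i-1" k] by auto
    thus ?thesis using S by linarith
  qed
  moreover have "\<bar>bext k y (i - 1) - 2 * y i + bext k y (i + 1)\<bar> \<le> 4*S"
  proof -
    have "\<bar>y i\<bar> \<le> S" using box i by auto
    thus ?thesis using bext_bound[OF box S0, of "i-1"] bext_bound[OF box S0, of "i+1"] by linarith
  qed
  ultimately show ?thesis unfolding rhs_def abs_mult by (intro mult_mono) auto
qed

lemma rhs_lip:
  assumes boxy: "\<forall>j\<in>{2..k}. \<bar>y j\<bar> \<le> S" and boxy': "\<forall>j\<in>{2..k}. \<bar>y' j\<bar> \<le> S"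
    and S: "real k * real k \<le> S" and i: "i \<in> {2..k}"
  shows "\<bar>rhs k y i - rhs k y' i\<bar> \<le> (12*S) * (\<Sum>m\<in>{2..k}. \<bar>y m - y' m\<bar>)"
proof -
  define \<Sigma> where "\<Sigma> = (\<Sum>m\<in>{2..k}. \<bar>y m - y' m\<bar>)"
  have S0: "0 \<le> S" using S by (metis mult_nonneg_nonneg of_nat_0_le_iff order_trans)
  define a where "a = y i + sigma k (i-1)"
  define a' where "a' = y' i + sigma k (i-1)"
  define p where "p = bext k y (i - 1) - 2 * y i + bext k y (i + 1)"
  define p' where "p' = bext k y' (i - 1) - 2 * y' i + bext k y' (i + 1)"
  have ha: "\<bar>a\<bar> \<le> 2*S"
  proof -
    have "0 \<le> sigma k (i-1)" "sigma k (i-1) \<le> real k * real k" "\<bar>y i\<bar> \<le> S"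
      using boxy i sigma_nonneg[of "i-1" k] sigma_le[of "i-1" k] by auto
    thus ?thesis unfolding a_def using S by linarith
  qed
  have hp': "\<bar>p'\<bar> \<le> 4*S"
  proof -
    have "\<bar>y' i\<bar> \<le> S" using boxy' i by auto
    thus ?thesis unfolding p'_def using bext_bound[OF boxy' S0, of "i-1"] bext_bound[OF boxy' S0, of "i+1"] by linarith
  qed
  have yi: "\<bar>y i - y' i\<bar> \<le> \<Sigma>" unfolding \<Sigma>_def using i
    by (intro member_le_sum) auto
  have hpp: "\<bar>p - p'\<bar> \<le> 4*\<Sigma>" unfolding p_def p'_def
    using bext_lip[of k y "i-1" y'] bext_lip[of k y "i+1" y'] yi unfolding \<Sigma>_def by linarith
  have haa: "\<bar>a - a'\<bar> \<le> \<Sigma>" unfolding a_def a'_def using yi by simp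
  have "rhs k y i - rhs k y' i = a * (p - p') + p' * (a - a')"
    unfolding rhs_def a_def a'_def p_def p'_def by (simp add: algebra_simps)
  also have "\<bar>\<dots>\<bar> \<le> \<bar>a\<bar> * \<bar>p - p'\<bar> + \<bar>p'\<bar> * \<bar>a - a'\<bar>"
    by (metis abs_mult abs_triangle_ineq)
  also have "\<dots> \<le> (2*S) * (4*\<Sigma>) + (4*S) * \<Sigma>"
    using ha hp' hpp haa S0 by (intro add_mono mult_mono) auto
  also have "\<dots> = (12*S) * \<Sigma>" by (simp add: algebra_simps)
  finally show ?thesis unfolding \<Sigma>_def .
qed


theorem proposition2p3:
  fixes k :: nat and \<eta> A :: real
  assumes "k \<ge> 2" and "0 < \<eta>" and "\<eta> \<le> 1/5" and "A \<ge> 0"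
  shows "(\<forall>T b. 0 < T \<and> is_solution k {0..<T} b \<and> inK k \<eta> A (b 0)
            \<longrightarrow> (\<forall>t\<in>{0..<T}. inK k \<eta> A (b t)))
       \<and> (\<forall>x0. inK k \<eta> A x0 \<longrightarrow>
            (\<exists>b. (\<forall>i\<in>{2..k}. b 0 i = x0 i) \<and> is_solution k {0..} b))"
proof -
  note k = assms(1) and eta0 = assms(2) and A = assms(4)
  have eta2: "\<eta> \<le> 1/2" using assms(3) by simp
  define lo where "lo i = - sigma k (i-1) + \<eta>" for i
  have loA: "lo j \<le> A" if "j \<in> {2..k}" for j
    using sigma_ge_half[of j k] that assms(3) A unfolding lo_def by auto
  have part1: "inK k \<eta> A (b t)" if T: "0 < T" and sol: "is_solution k {0..<T} b" and b0: "inK k \<eta> A (b 0)"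
    and t: "t \<in> {0..<T}" for T b t
    unfolding inK_def
  proof
    fix i assume i: "i \<in> {2..k}"
    have "lo i \<le> b t i \<and> b t i \<le> A"
    proof (rule invariance[where f="rhs k" and dd=\<eta> and T=T and I="{2..k}" and lo=lo and hi=A and b=b])
      show "finite {2..k}" by simp
      show "0 < \<eta>" by (fact eta0)
      show "(x i = A + \<delta> \<longrightarrow> rhs k x i \<le> 0) \<and> (x i = lo i - \<delta> \<longrightarrow> 0 \<le> rhs k x i)"
        if "0 < \<delta>" "\<delta> < \<eta>" "i \<in> {2..k}" "\<forall>j\<in>{2..k}. lo j - \<delta> \<le> x j \<and> x j \<le> A + \<delta>" for x i \<delta>
        using sign_rhs[OF k eta2 _ _ A, of \<delta> i x] that unfolding lo_def by auto
      show "((\<lambda>s. b s i) has_real_derivative rhs k (b t) i) (at t within {0..<T})"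
        if "t \<in> {0..<T}" "i \<in> {2..k}" for t i
        using sol that unfolding is_solution_def by blast
      show "lo i \<le> b 0 i \<and> b 0 i \<le> A" if "i \<in> {2..k}" for i
        using b0 that unfolding inK_def lo_def by blast
    qed (use t i in auto)
    thus "- sigma k (i - 1) + \<eta> \<le> b t i \<and> b t i \<le> A" unfolding lo_def .
  qed
  have part2: "\<exists>b. (\<forall>i\<in>{2..k}. b 0 i = x0 i) \<and> is_solution k {0..} b" if x0: "inK k \<eta> A x0" for x0
  proof -
    define G where "G x i = rhs k (clampK k \<eta> A x) i" for x i
    define S where "S = A + real k * real k"
    have S: "real k * real k \<le> S" unfolding S_def using A by simp
    have clamp_in: "lo j \<le> clampK k \<eta> A x j \<and> clampK k \<eta> A x j \<le> A" if "j \<in> {2..k}" for x j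
      using loA[OF that] that unfolding clampK_def lo_def by auto
    have clamp_abs: "\<forall>j\<in>{2..k}. \<bar>clampK k \<eta> A x j\<bar> \<le> S" for x
    proof
      fix j assume j: "j \<in> {2..k}"
      have "sigma k (j-1) \<le> real k * real k" using sigma_le[of "j-1" k] j by auto
      thus "\<bar>clampK k \<eta> A x j\<bar> \<le> S" using clamp_in[OF j, of x] eta0 A unfolding lo_def S_def abs_le_iff by (simp add: add_increasing2)
    qed
    have clamp_lip: "\<bar>clampK k \<eta> A x j - clampK k \<eta> A y j\<bar> \<le> \<bar>x j - y j\<bar>" for x y j
      unfolding clampK_def by (auto simp: max_def min_def)
    have S0: "0 \<le> S" using S by (metis mult_nonneg_nonneg of_nat_0_le_iff order_trans)
    have bnd: "\<bar>G x i\<bar> \<le> (2*S) * (4*S)" if "i \<in> {2..k}" for x i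
      unfolding G_def by (rule rhs_bound[OF clamp_abs S that])
    have lip: "\<bar>G x i - G y i\<bar> \<le> (12*S) * (\<Sum>j\<in>{2..k}. \<bar>x j - y j\<bar>)" if "i \<in> {2..k}" for x y i
    proof -
      have "\<bar>G x i - G y i\<bar> \<le> (12*S) * (\<Sum>j\<in>{2..k}. \<bar>clampK k \<eta> A x j - clampK k \<eta> A y j\<bar>)"
        unfolding G_def by (rule rhs_lip[OF clamp_abs clamp_abs S that])
      also have "\<dots> \<le> (12*S) * (\<Sum>j\<in>{2..k}. \<bar>x j - y j\<bar>)"
        using S0 by (intro mult_left_mono sum_mono clamp_lip) auto
      finally show ?thesis .
    qed
    obtain b where b0: "b 0 = x0"
      and bder: "\<forall>t\<ge>0. \<forall>i\<in>{2..k}. ((\<lambda>s. b s i) has_real_derivative G (b t) i) (at t within {0..})"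
      using picard[of "{2..k}" "(2*S) * (4*S)" "12*S" G x0] bnd lip S0 by auto
    have inv: "lo i \<le> b t i \<and> b t i \<le> A" if t: "0 \<le> t" and i: "i \<in> {2..k}" for t i
    proof (rule invariance[where f=G and dd=1 and T="t+1" and I="{2..k}" and lo=lo and hi=A and b=b])
      show "finite {2..k}" by simp
      show "(0::real) < 1" by simp
      show "(x i = A + \<delta> \<longrightarrow> G x i \<le> 0) \<and> (x i = lo i - \<delta> \<longrightarrow> 0 \<le> G x i)"
        if "0 < \<delta>" "\<delta> < 1" "i \<in> {2..k}" "\<forall>j\<in>{2..k}. lo j - \<delta> \<le> x j \<and> x j \<le> A + \<delta>" for x i \<delta>
      proof -
        have box: "\<forall>j\<in>{2..k}. - sigma k (j-1) + \<eta> - 0 \<le> clampK k \<eta> A x j \<and> clampK k \<eta> A x j \<le> A + 0"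
          using clamp_in unfolding lo_def by auto
        note sr = sign_rhs[OF k eta2 order_refl eta0 A that(3) box]
        show ?thesis
        proof (intro conjI impI)
          assume "x i = A + \<delta>"
          hence "clampK k \<eta> A x i = A + 0" using that loA[OF that(3)] unfolding clampK_def lo_def by auto
          thus "G x i \<le> 0" using sr unfolding G_def by auto
        next
          assume "x i = lo i - \<delta>"
          hence "clampK k \<eta> A x i = - sigma k (i-1) + \<eta> - 0" using that loA[OF that(3)] unfolding clampK_def lo_def by auto
          thus "0 \<le> G x i" using sr unfolding G_def by auto
        qed
      qed
      show "((\<lambda>s. b s i) has_real_derivative G (b u) i) (at u within {0..<t+1})"
        if "u \<in> {0..<t+1}" "i \<in> {2..k}" for u i
        by (rule has_field_derivative_subset[OF bder[rule_format]]) (use that in auto)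
      show "lo i \<le> b 0 i \<and> b 0 i \<le> A" if "i \<in> {2..k}" for i
        using x0 that unfolding inK_def lo_def b0 by blast
    qed (use t i in auto)
    have "is_solution k {0..} b"
      unfolding is_solution_def
    proof (intro ballI)
      fix t i assume t: "t \<in> {0::real..}" and i: "i \<in> {2..k}"
      have "\<forall>j\<in>{2..k}. clampK k \<eta> A (b t) j = b t j"
      proof
        fix j assume j: "j \<in> {2..k}"
        have "lo j \<le> b t j \<and> b t j \<le> A" using inv t j by auto
        thus "clampK k \<eta> A (b t) j = b t j" using j unfolding clampK_def lo_def by auto
      qed
      hence "G (b t) i = rhs k (b t) i" unfolding G_def by (rule rhs_local[OF _ i])
      thus "((\<lambda>s. b s i) has_real_derivative rhs k (b t) i) (at t within {0..})"
        using bder t i by (metis atLeast_iff)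
    qed
    thus ?thesis using b0 by auto
  qed
  show ?thesis using part1 part2 by blast
qed

end
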